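(* Let $\gamma$ be a generator of $\mathbb{F}_{q^m}^*$, let $\ell\in\{0,1,\dots,q-2\}$, and let $\beta_1,\dots,\beta_m\in\mathbb{F}_{q^m}$ be linearly independent over $\mathbb{F}_q$. Then the $m\times m$ matrix $M$ whose $(i,j)$ entry, for $i=0,\dots,m-1$ and $j=1,\dots,m$, is $\gamma^{\ell(1+q+\cdots+q^{i-1})}\beta_j^{q^i-1}$ (so row $i=0$ is all ones) is full rank. *)

theory Defs
  imports "Jordan_Normal_Form.DL_Rank"
begin

definition subfield_Fq :: "nat \<Rightarrow> 'a::field set" where
  "subfield_Fq q = {x. x ^ q = x}"

definition lin_indep_over_Fq :: "nat \<Rightarrow> nat \<Rightarrow> (nat \<Rightarrow> 'a::field) \<Rightarrow> bool" where
  "lin_indep_over_Fq q m \<beta> \<longleftrightarrow>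
     (\<forall>c. (\<forall>j\<in>{1..m}. c j \<in> subfield_Fq q) \<and> (\<Sum>j=1..m. c j * \<beta> j) = 0
          \<longrightarrow> (\<forall>j\<in>{1..m}. c j = 0))"

definition mult_generator :: "'a::field \<Rightarrow> bool" where
  "mult_generator \<gamma> \<longleftrightarrow> \<gamma> \<noteq> 0 \<and> (\<forall>x. x \<noteq> 0 \<longrightarrow> (\<exists>k::nat. x = \<gamma> ^ k))"

end

theory Submission
  imports Defs "HOL-Algebra.Sylow" "HOL-Computational_Algebra.Primes" "HOL-Computational_Algebra.Polynomial" "HOL-Library.FuncSet"
begin


lemma ffield_prime_divisor:
  fixes r :: nat
  assumes "prime r" "r dvd card (UNIV :: 'a::{field,finite} set)"
  shows "r = CHAR('a)"
proof (rule ccontr)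
  assume ne: "r \<noteq> CHAR('a)"
  define p where "p = CHAR('a)"
  have pprime: "prime p" unfolding p_def
    by (simp add: finite_imp_CHAR_pos prime_CHAR_semidom)
  define N where "N = card (UNIV :: 'a set)"
  have N0: "N > 0" unfolding N_def by (simp add: finite_UNIV_card_ge_0)
  define a where "a = multiplicity r N"
  obtain m' where Nm: "N = r ^ a * m'" unfolding a_def
    using multiplicity_dvd by (metis dvd_def)
  have a1: "a \<ge> 1" unfolding a_def using assms N0
    by (metis N_def One_nat_def Suc_le_eq multiplicity_gt_zero_iff not_prime_unit not_gr_zero not_prime_0 prime_imp_prime_elem)
  define G where "G = \<lparr> carrier = (UNIV :: 'a set), monoid.mult = (+), one = (0 :: 'a) \<rparr>"
  interpret group G
  proof (rule groupI)
    fix x assume x: "x \<in> carrier G"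
    show "\<exists>y\<in>carrier G. y \<otimes>\<^bsub>G\<^esub> x = \<one>\<^bsub>G\<^esub>"
      by (intro bexI[of _ "-x"]) (auto simp: G_def)
  qed (auto simp: G_def add_ac)
  have ordG: "Coset.order G = r ^ a * m'" unfolding Coset.order_def G_def using Nm N_def by simp
  obtain H where H: "subgroup H G" "card H = r ^ a"
    using sylow_thm[OF assms(1) is_group ordG] by (auto simp: G_def)
  have "r ^ 1 \<le> r ^ a" using a1 prime_gt_1_nat[OF assms(1)] by (intro power_increasing) auto
  hence "card H \<ge> 2" using H(2) prime_ge_2_nat[OF assms(1)] by simp
  then obtain h where h: "h \<in> H" "h \<noteq> 0"
  proof -
    from \<open>card H \<ge> 2\<close> obtain x y where "x \<in> H" "y \<in> H" "x \<noteq> y"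
      by (metis card_le_Suc0_iff_eq not_less_eq_eq numeral_2_eq_2 card.infinite zero_less_numeral not_numeral_le_zero)
    thus ?thesis using that by metis
  qed
  define P where "P = (\<lambda>k. of_nat k * h) ` {..<p}"
  have p0: "p > 0" using pprime prime_gt_0_nat by blast
  have PH: "of_nat k * h \<in> H" for k
  proof (induction k)
    case 0 then show ?case using subgroup.one_closed[OF H(1)] by (simp add: G_def)
  next
    case (Suc k)
    have "h \<otimes>\<^bsub>G\<^esub> (of_nat k * h) \<in> H" using subgroup.m_closed[OF H(1) h(1) Suc] .
    thus ?case by (simp add: G_def algebra_simps)
  qed
  have ofp: "(of_nat p :: 'a) = 0" unfolding p_def by simp
  have ofnat_mod: "(of_nat k :: 'a) = of_nat (k mod p)" for k
  proof -
    have "(of_nat k :: 'a) = of_nat (k mod p + p * (k div p))" by simp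
    also have "\<dots> = of_nat (k mod p)" by (simp only: of_nat_add of_nat_mult ofp) simp
    finally show ?thesis .
  qed
  have ofnat_inj: "x = y" if "x < p" "y < p" "(of_nat x :: 'a) = of_nat y" for x y
  proof -
    have *: "a = b" if "a \<le> b" "b < p" "(of_nat a :: 'a) = of_nat b" for a b
    proof -
      have "(of_nat (b - a) :: 'a) = 0" using that by (simp add: of_nat_diff)
      hence "p dvd (b - a)" unfolding p_def by (simp add: of_nat_eq_0_iff_char_dvd)
      moreover have "b - a < p" using that by linarith
      ultimately have "b - a = 0" by (metis nat_dvd_not_less neq0_conv)
      thus ?thesis using that by linarith
    qed
    show ?thesis using *[of x y] *[of y x] that by (cases "x \<le> y") auto
  qed
  have subP: "subgroup P G"
  proof
    show "P \<subseteq> carrier G" by (simp add: G_def)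
  next
    show "\<one>\<^bsub>G\<^esub> \<in> P" unfolding P_def G_def using p0 by (force intro: image_eqI[of _ _ 0])
  next
    fix x y assume "x \<in> P" "y \<in> P"
    then obtain x' y' where [simp]: "x = of_nat x' * h" "y = of_nat y' * h"
      by (auto simp: P_def)
    have "x + y = of_nat (x' + y') * h" by (simp add: distrib_right)
    hence "x + y = of_nat ((x' + y') mod p) * h" using ofnat_mod[of "x'+y'"] by simp
    thus "x \<otimes>\<^bsub>G\<^esub> y \<in> P" unfolding P_def G_def using p0 by auto
  next
    fix x assume x: "x \<in> P"
    then obtain x' where [simp]: "x = of_nat x' * h" and x': "x' < p"
      by (auto simp: P_def)
    have "of_nat (x' + (p - x') mod p) = (0::'a)"
      using x' ofnat_mod[of "x' + (p - x') mod p"] by (simp add: mod_add_right_eq)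
    hence "x + of_nat ((p - x') mod p) * h = 0"
      by (metis distrib_right mult_zero_left of_nat_add \<open>x = _\<close>)
    moreover from this have "inv\<^bsub>G\<^esub> x = of_nat ((p - x') mod p) * h"
      by (intro inv_equality) (auto simp: G_def add_ac)
    moreover have "of_nat ((p - x') mod p) * h \<in> P"
      unfolding P_def using p0 by (intro imageI) auto
    ultimately show "inv\<^bsub>G\<^esub> x \<in> P" by force
  qed
  have PsubH: "P \<subseteq> H" unfolding P_def using PH by auto
  interpret GH: group "G\<lparr>carrier := H\<rparr>" by (rule subgroup_imp_group[OF H(1)])
  have subPH: "subgroup P (G\<lparr>carrier := H\<rparr>)" by (rule subgroup_incl[OF subP H(1) PsubH])
  have "card (rcosets\<^bsub>G\<lparr>carrier := H\<rparr>\<^esub> P) * card P = Coset.order (G\<lparr>carrier := H\<rparr>)"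
    by (rule GH.lagrange_finite[OF _ subPH]) simp
  hence "card P dvd card H" by (simp add: Coset.order_def) (metis dvd_triv_right)
  moreover have "card P = p" unfolding P_def
  proof (subst card_image)
    show "inj_on (\<lambda>k. of_nat k * h) {..<p}"
    proof
      fix x y assume "x \<in> {..<p}" "y \<in> {..<p}" "(of_nat x :: 'a) * h = of_nat y * h"
      hence "(of_nat x :: 'a) = of_nat y" "x < p" "y < p" using h(2) by auto
      thus "x = y" using ofnat_inj by blast
    qed
  qed simp
  ultimately have "p dvd r ^ a" using H(2) by simp
  hence "p dvd r" using pprime prime_dvd_power by blast
  hence "p = r" using pprime assms(1) by (simp add: primes_dvd_imp_eq)
  thus False using ne p_def by simp
qed



lemma ffield_card_CHAR_pow:
  "\<exists>n. card (UNIV :: 'a::{field,finite} set) = CHAR('a) ^ n"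
proof -
  define N where "N = card (UNIV :: 'a set)"
  define c where "c = CHAR('a)"
  have cp: "prime c" unfolding c_def by (simp add: finite_imp_CHAR_pos prime_CHAR_semidom)
  have N0: "N \<noteq> 0" unfolding N_def by (simp add: finite_UNIV_card_ge_0)
  have nu: "\<not> is_unit c" using cp not_prime_unit by blast
  obtain y where y: "N = c ^ multiplicity c N * y" "\<not> c dvd y"
    using multiplicity_decompose'[OF N0 nu] by blast
  have "y = 1"
  proof (rule ccontr)
    assume "y \<noteq> 1"
    then obtain r where r: "prime r" "r dvd y" using prime_factor_nat by blast
    hence "r dvd N" using y(1) by (metis dvd_mult2 mult.commute)
    hence "r = c" using ffield_prime_divisor[OF r(1)] unfolding N_def c_def by blast
    thus False using r y by simp
  qed
  thus ?thesis using y unfolding N_def c_def by auto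
qed

lemma q_is_CHAR_pow:
  assumes "card (UNIV :: 'a::{field,finite} set) = q ^ m" "m \<ge> 1"
  shows "\<exists>k. q = CHAR('a) ^ k"
proof -
  obtain n where "card (UNIV :: 'a set) = CHAR('a) ^ n" using ffield_card_CHAR_pow by blast
  hence "q ^ m = CHAR('a) ^ n" using assms by simp
  thus ?thesis using prime_power_exp_nat[of "CHAR('a)" m q n] assms(2)
    by (simp add: finite_imp_CHAR_pos prime_CHAR_semidom)
qed

lemma frob_add:
  assumes "card (UNIV :: 'a::{field,finite} set) = q ^ m" "m \<ge> 1"
  shows "((x::'a) + y) ^ (q ^ i) = x ^ (q ^ i) + y ^ (q ^ i)"
proof -
  obtain k where k: "q = CHAR('a) ^ k" using q_is_CHAR_pow[OF assms] by blast
  show ?thesis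
    by (rule freshmans_dream'[where n = "k * i"])
       (simp_all add: finite_imp_CHAR_pos prime_CHAR_semidom k power_mult)
qed

lemma frob_sum:
  assumes "card (UNIV :: 'a::{field,finite} set) = q ^ m" "m \<ge> 1"
  shows "(sum (f :: _ \<Rightarrow> 'a) A) ^ (q ^ i) = (\<Sum>x\<in>A. f x ^ (q ^ i))"
proof -
  obtain k where k: "q = CHAR('a) ^ k" using q_is_CHAR_pow[OF assms] by blast
  show ?thesis
    by (rule freshmans_dream_sum'[where n = "k * i"])
       (simp_all add: finite_imp_CHAR_pos prime_CHAR_semidom k power_mult)
qed

lemma Fq_pow:
  assumes "(c::'a::field) \<in> subfield_Fq q"
  shows "c ^ (q ^ i) = c"
proof (induction i)
  case (Suc i)
  have "c ^ (q ^ Suc i) = (c ^ q) ^ (q ^ i)" by (simp add: power_mult mult.commute)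
  also have "\<dots> = c" using assms Suc by (simp add: subfield_Fq_def)
  finally show ?case .
qed simp

lemma Fq_diff:
  assumes "card (UNIV :: 'a::{field,finite} set) = q ^ m" "m \<ge> 1"
    and "c \<in> subfield_Fq q" "d \<in> subfield_Fq q"
  shows "(c::'a) - d \<in> subfield_Fq q"
proof -
  have "((c - d) + d) ^ (q ^ 1) = (c - d) ^ (q ^ 1) + d ^ (q ^ 1)" by (rule frob_add[OF assms(1,2)])
  thus ?thesis using assms(3,4) by (simp add: subfield_Fq_def eq_diff_eq)
qed

lemma ffield_pow_card:
  fixes x :: "'a :: {field,finite}"
  shows   "x ^ card (UNIV :: 'a set) = x"
proof (cases "x = 0")
  case False
  have "x * (\<Prod>y\<in>UNIV-{0}. x * y) = x * x ^ (card (UNIV :: 'a set) - 1) * \<Prod>(UNIV-{0})"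
    by (simp add: prod.distrib mult_ac)
  also have "x * x ^ (card (UNIV :: 'a set) - 1) = x ^ Suc (card (UNIV :: 'a set) - 1)"
    by (subst power_Suc) auto
  also have "Suc (card (UNIV :: 'a set) - 1) = card (UNIV :: 'a set)"
    using finite_UNIV_card_ge_0[where ?'a = 'a] by simp
  also have "(\<Prod>y\<in>UNIV-{0}. x * y) = (\<Prod>y\<in>UNIV-{0}. y)"
    by (rule prod.reindex_bij_witness[of _ "\<lambda>y. y / x" "\<lambda>y. x * y"]) (use False in auto)
  finally show ?thesis
    by simp
qed (use finite_UNIV_card_ge_0[where ?'a = 'a] in auto)



lemma geom_nat: "(\<Sum>i<m. (Suc r) ^ i) * r + 1 = (Suc r) ^ m"
  by (induction m) (simp_all add: algebra_simps)

lemma Fq_card_ge: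
  fixes \<gamma> :: "'a::{field,finite}"
  assumes card: "card (UNIV :: 'a set) = q ^ m" and m1: "m \<ge> 1" and q2: "q \<ge> 2"
    and gen: "mult_generator \<gamma>"
  shows "card (subfield_Fq q :: 'a set) \<ge> q"
proof -
  define N where "N = card (UNIV :: 'a set)"
  have g0: "\<gamma> \<noteq> 0" and genx: "\<And>x. x \<noteq> 0 \<Longrightarrow> \<exists>k. x = \<gamma> ^ k"
    using gen unfolding mult_generator_def by auto
  have N0: "N > 0" unfolding N_def by (simp add: finite_UNIV_card_ge_0)
  have "\<gamma> * \<gamma> ^ (N - 1) = \<gamma> ^ Suc (N - 1)" by simp
  also have "Suc (N - 1) = N" using N0 by simp
  also have "\<gamma> ^ N = \<gamma>" unfolding N_def by (rule ffield_pow_card)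
  finally have gN: "\<gamma> ^ (N - 1) = 1" using g0 by simp
  have cardnz: "card (UNIV - {0::'a}) = N - 1" unfolding N_def by (simp add: card_Diff_subset)
  have inj: "inj_on (\<lambda>j. \<gamma> ^ j) {..<N-1}"
  proof -
    have *: "a = b" if ab: "a \<le> b" "b < N - 1" "\<gamma> ^ a = \<gamma> ^ b" for a b
    proof (rule ccontr)
      assume "a \<noteq> b"
      define e where "e = b - a"
      have e0: "e > 0" and eN: "e < N - 1" using ab \<open>a \<noteq> b\<close> unfolding e_def by auto
      have "a + e = b" using ab by (simp add: e_def)
      hence "\<gamma> ^ a * \<gamma> ^ e = \<gamma> ^ b" by (simp flip: power_add)
      hence "\<gamma> ^ a * \<gamma> ^ e = \<gamma> ^ a * 1" using ab by simp
      hence ge: "\<gamma> ^ e = 1" using g0 by simp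
      have "UNIV - {0} \<subseteq> (\<lambda>j. \<gamma> ^ j) ` {..<e}"
      proof
        fix x :: 'a assume "x \<in> UNIV - {0}"
        then obtain k where k: "x = \<gamma> ^ k" using genx by blast
        have "\<gamma> ^ k = \<gamma> ^ (e * (k div e) + k mod e)" by simp
        also have "\<dots> = \<gamma> ^ (k mod e)" by (simp only: power_add power_mult ge) simp
        finally show "x \<in> (\<lambda>j. \<gamma> ^ j) ` {..<e}" using k e0 by auto
      qed
      hence "card (UNIV - {0::'a}) \<le> card ((\<lambda>j. \<gamma> ^ j) ` {..<e})" by (intro card_mono) auto
      also have "\<dots> \<le> e" using card_image_le[of "{..<e}" "\<lambda>j. \<gamma> ^ j"] by simp
      finally show False using cardnz eN by simp
    qed
    show ?thesis
    proof
      fix a b assume "a \<in> {..<N-1}" "b \<in> {..<N-1}" "\<gamma> ^ a = \<gamma> ^ b"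
      thus "a = b" using *[of a b] *[of b a] by (cases "a \<le> b") auto
    qed
  qed
  obtain r where r: "q = Suc r" using q2 by (cases q) auto
  define s where "s = (\<Sum>i<m. q ^ i)"
  have sq: "s * (q - 1) = N - 1" using geom_nat[where m=m and r=r] r card unfolding s_def N_def by simp
  have "q ^ 1 \<le> q ^ m" using m1 q2 by (intro power_increasing) auto
  hence "N \<ge> 2" using q2 card unfolding N_def by simp
  hence "s * (q - 1) > 0" using sq by simp
  hence s0: "s > 0" by simp
  define T where "T = (\<lambda>t. \<gamma> ^ (s * t)) ` {..<q-1}"
  have TK: "T \<subseteq> subfield_Fq q"
  proof
    fix z assume "z \<in> T"
    then obtain t where z: "z = \<gamma> ^ (s * t)" by (auto simp: T_def)
    have "z ^ (q - 1) = (\<gamma> ^ (N - 1)) ^ t"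
    proof -
      have "s * t * (q - 1) = (N - 1) * t" using sq by (metis mult.assoc mult.commute)
      have "z ^ (q - 1) = \<gamma> ^ (s * t * (q - 1))" unfolding z by (simp add: power_mult)
      also have "\<dots> = \<gamma> ^ ((N - 1) * t)" by (simp only: \<open>s * t * (q - 1) = (N - 1) * t\<close>)
      also have "\<dots> = (\<gamma> ^ (N - 1)) ^ t" by (simp add: power_mult)
      finally show ?thesis .
    qed
    hence z1: "z ^ (q - 1) = 1" using gN by simp
    have "z ^ q = z * z ^ (q - 1)" using r by simp
    thus "z \<in> subfield_Fq q" using z1 by (simp add: subfield_Fq_def)
  qed
  have T0: "0 \<notin> T" using g0 by (auto simp: T_def)
  have cardT: "card T = q - 1" unfolding T_def
  proof (subst card_image)
    show "inj_on (\<lambda>t. \<gamma> ^ (s * t)) {..<q - 1}"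
    proof
      fix a b assume ab: "a \<in> {..<q - 1}" "b \<in> {..<q - 1}" "\<gamma> ^ (s * a) = \<gamma> ^ (s * b)"
      have "s * a < s * (q - 1)" "s * b < s * (q - 1)" using ab s0 by auto
      hence "s * a < N - 1" "s * b < N - 1" by (simp_all only: sq)
      hence "s * a = s * b" using inj ab(3) unfolding inj_on_def by blast
      thus "a = b" using s0 by simp
    qed
  qed simp
  have "0 \<in> subfield_Fq q" using q2 by (simp add: subfield_Fq_def)
  hence "insert 0 T \<subseteq> subfield_Fq q" using TK by auto
  hence "card (insert 0 T) \<le> card (subfield_Fq q :: 'a set)" by (intro card_mono) auto
  moreover have "card (insert 0 T) = q" using T0 cardT q2 by (simp add: T_def)
  ultimately show ?thesis by simp
qed



lemma moore_rows:
  fixes \<beta> a :: "nat \<Rightarrow> 'a::{field,finite}" and \<gamma> :: 'a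
  assumes card: "card (UNIV :: 'a set) = q ^ m" and m1: "m \<ge> 1" and q2: "q \<ge> 2"
    and gen: "mult_generator \<gamma>" and li: "lin_indep_over_Fq q m \<beta>"
    and rel: "\<forall>j\<in>{1..m}. (\<Sum>i<m. a i * \<beta> j ^ (q ^ i)) = 0"
  shows "\<forall>i<m. a i = 0"
proof (rule ccontr)
  assume "\<not> ?thesis"
  then obtain i0 where i0: "i0 < m" "a i0 \<noteq> 0" by auto
  define K where "K = (subfield_Fq q :: 'a set)"
  define L where "L = (\<Sum>i<m. monom (a i) (q ^ i))"
  have polyL: "poly L x = (\<Sum>i<m. a i * x ^ (q ^ i))" for x
    unfolding L_def by (simp add: poly_sum poly_monom)
  have q1: "1 < q" using q2 by simp
  have "coeff L (q ^ i0) = (\<Sum>i<m. if i = i0 then a i else 0)"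
    unfolding L_def coeff_sum coeff_monom using q1 by simp
  also have "\<dots> = a i0" using i0(1) by simp
  finally have L0: "L \<noteq> 0" using i0(2) by auto
  have degL: "degree L \<le> q ^ (m - 1)" unfolding L_def
  proof (rule degree_sum_le)
    fix i assume "i \<in> {..<m}"
    hence "q ^ i \<le> q ^ (m - 1)" using q1 by (intro power_increasing) auto
    thus "degree (monom (a i) (q ^ i)) \<le> q ^ (m - 1)" using degree_monom_le order.trans by blast
  qed simp
  define f where "f = (\<lambda>c. \<Sum>j\<in>{1..m}. c j * \<beta> j)"
  define S where "S = f ` (PiE {1..m} (\<lambda>_. K))"
  have injS: "inj_on f (PiE {1..m} (\<lambda>_. K))"
  proof
    fix c d assume c: "c \<in> PiE {1..m} (\<lambda>_. K)" and d: "d \<in> PiE {1..m} (\<lambda>_. K)" and eq: "f c = f d"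
    define e where "e j = c j - d j" for j
    have eK: "\<forall>j\<in>{1..m}. e j \<in> subfield_Fq q"
      using c d Fq_diff[OF card m1] unfolding e_def K_def by (auto simp: PiE_def Pi_def)
    have "(\<Sum>j=1..m. e j * \<beta> j) = f c - f d"
      unfolding e_def f_def by (simp add: left_diff_distrib sum_subtractf)
    hence "(\<Sum>j=1..m. e j * \<beta> j) = 0" using eq by simp
    hence "\<forall>j\<in>{1..m}. e j = 0" using li eK unfolding lin_indep_over_Fq_def by blast
    thus "c = d" using c d by (intro PiE_ext) (auto simp: e_def)
  qed
  have "card S = card (PiE {1..m} (\<lambda>_. K))" unfolding S_def by (rule card_image[OF injS])
  also have "\<dots> = card K ^ m" by (simp add: card_PiE)
  finally have "card S = card K ^ m" .
  moreover have "card K \<ge> q" unfolding K_def by (rule Fq_card_ge[OF card m1 q2 gen])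
  ultimately have cS: "card S \<ge> q ^ m" by (simp add: power_mono)
  have SR: "S \<subseteq> {x. poly L x = 0}"
  proof
    fix x assume "x \<in> S"
    then obtain c where c: "c \<in> PiE {1..m} (\<lambda>_. K)" and x: "x = f c" by (auto simp: S_def)
    have cK: "\<And>j. j \<in> {1..m} \<Longrightarrow> c j \<in> subfield_Fq q" using c unfolding K_def by auto
    have "poly L x = (\<Sum>i<m. a i * (\<Sum>j\<in>{1..m}. (c j * \<beta> j) ^ (q ^ i)))"
      unfolding polyL x f_def by (simp add: frob_sum[OF card m1])
    also have "\<dots> = (\<Sum>i<m. a i * (\<Sum>j\<in>{1..m}. c j * \<beta> j ^ (q ^ i)))"
      by (intro sum.cong refl arg_cong2[where f="(*)"]) (simp add: power_mult_distrib Fq_pow[OF cK])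
    also have "\<dots> = (\<Sum>j\<in>{1..m}. c j * (\<Sum>i<m. a i * \<beta> j ^ (q ^ i)))"
      by (simp add: sum_distrib_left sum.swap[of _ "{..<m}"] mult_ac)
    also have "\<dots> = 0" using rel by simp
    finally show "x \<in> {x. poly L x = 0}" by simp
  qed
  have "card S \<le> card {x. poly L x = 0}" by (rule card_mono[OF _ SR]) simp
  also have "\<dots> \<le> degree L" by (rule card_poly_roots_bound[OF L0])
  also have "\<dots> \<le> q ^ (m - 1)" by (rule degL)
  also have "\<dots> < q ^ m" using q1 m1 by (intro power_strict_increasing) auto
  finally show False using cS by simp
qed

theorem corollary2p17:
  fixes \<gamma> :: "'a::{field,finite}" and \<beta> :: "nat \<Rightarrow> 'a" and q m l :: nat
  assumes "q \<ge> 2" and "m \<ge> 1" and "card (UNIV :: 'a set) = q ^ m"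
    and "mult_generator \<gamma>"
    and "l \<le> q - 2"
    and "lin_indep_over_Fq q m \<beta>"
  shows "vec_space.rank m
           (mat m m (\<lambda>(i, j). \<gamma> ^ (l * (\<Sum>k<i. q ^ k)) * \<beta> (j + 1) ^ (q ^ i - 1))) = m"
proof -
  let ?A = "mat m m (\<lambda>(i, j). \<gamma> ^ (l * (\<Sum>k<i. q ^ k)) * \<beta> (j + 1) ^ (q ^ i - 1))"
  have A: "?A \<in> carrier_mat m m" by simp
  have g0: "\<gamma> \<noteq> 0" using assms(4) unfolding mult_generator_def by auto
  have "det ?A \<noteq> 0"
  proof
    assume "det ?A = 0"
    hence "det (transpose_mat ?A) = 0" using det_transpose[OF A] by simp
    moreover have "transpose_mat ?A \<in> carrier_mat m m" by simp
    ultimately obtain v where v: "v \<in> carrier_vec m" "v \<noteq> 0\<^sub>v m" "transpose_mat ?A *\<^sub>v v = 0\<^sub>v m"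
      using det_0_iff_vec_prod_zero by blast
    define a where "a i = v $ i * \<gamma> ^ (l * (\<Sum>k<i. q ^ k))" for i
    have rel: "\<forall>j\<in>{1..m}. (\<Sum>i<m. a i * \<beta> j ^ (q ^ i)) = 0"
    proof
      fix j assume j: "j \<in> {1..m}"
      have "(transpose_mat ?A *\<^sub>v v) $ (j - 1) = 0" using v(3) j by auto
      moreover have "(transpose_mat ?A *\<^sub>v v) $ (j - 1) = (\<Sum>i\<in>{0..<m}. ?A $$ (i, j - 1) * v $ i)"
      proof -
        have jm: "j - 1 < m" using j by auto
        have "(transpose_mat ?A *\<^sub>v v) $ (j - 1) = row (transpose_mat ?A) (j - 1) \<bullet> v"
          by (rule index_mult_mat_vec) (use jm in simp)
        also have "\<dots> = (\<Sum>i\<in>{0..<m}. ?A $$ (i, j - 1) * v $ i)"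
          using jm v(1) unfolding scalar_prod_def by (intro sum.cong) auto
        finally show ?thesis .
      qed
      moreover have "(\<Sum>i\<in>{0..<m}. ?A $$ (i, j - 1) * v $ i)
          = (\<Sum>i<m. \<gamma> ^ (l * (\<Sum>k<i. q ^ k)) * \<beta> j ^ (q ^ i - 1) * v $ i)"
        unfolding lessThan_atLeast0 using j by (intro sum.cong refl) auto
      ultimately have "(\<Sum>i<m. \<gamma> ^ (l * (\<Sum>k<i. q ^ k)) * \<beta> j ^ (q ^ i - 1) * v $ i) = 0"
        by simp
      hence "\<beta> j * (\<Sum>i<m. \<gamma> ^ (l * (\<Sum>k<i. q ^ k)) * \<beta> j ^ (q ^ i - 1) * v $ i) = 0" by simp
      moreover have "\<beta> j * (\<Sum>i<m. \<gamma> ^ (l * (\<Sum>k<i. q ^ k)) * \<beta> j ^ (q ^ i - 1) * v $ i)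
          = (\<Sum>i<m. a i * \<beta> j ^ (q ^ i))"
      proof -
        have eq: "\<beta> j * (\<gamma> ^ (l * (\<Sum>k<i. q ^ k)) * \<beta> j ^ (q ^ i - 1) * v $ i) = a i * \<beta> j ^ (q ^ i)" for i
        proof -
          have "q ^ i \<ge> 1" using assms(1) by simp
          hence "\<beta> j ^ (q ^ i) = \<beta> j * \<beta> j ^ (q ^ i - 1)"
            by (metis Suc_diff_1 le_less_trans less_numeral_extra(1) less_one not_less power_Suc)
          thus ?thesis unfolding a_def by (simp add: mult_ac)
        qed
        show ?thesis by (simp only: sum_distrib_left[of "\<beta> j"] eq)
      qed
      ultimately show "(\<Sum>i<m. a i * \<beta> j ^ (q ^ i)) = 0" by metis
    qed
    have "\<forall>i<m. a i = 0" by (rule moore_rows[OF assms(3,2,1,4,6) rel])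
    hence "v = 0\<^sub>v m" using v(1) g0 by (intro eq_vecI) (auto simp: a_def)
    thus False using v(2) by simp
  qed
  thus ?thesis using vec_space.det_rank_iff[OF A] by simp
qed

end
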